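(* Let $L$ be a distributive lattice and $l\in L$. Then $|\delta_l|$ is a weak order unit of $\mathrm{FBL}\langle L\rangle$: if $f\in\mathrm{FBL}\langle L\rangle$ satisfies $|f|\wedge|\delta_l|=0$, then $f=0$.
   Context: $L^*$ is the set of all lattice homomorphisms $x^*:L\to[-1,1]$ (a subset of $\mathbb R^L$ with the product topology); for $x\in L$, $\delta_x:L^*\to\mathbb R$ is $\delta_x(x^* )=x^*(x)$. A function $f:L^*\to\mathbb R$ is positively homogeneous if $f(\lambda x^* )=\lambda f(x^* )$ whenever $\lambda\ge0$ and $\lambda x^*\in L^*$; for such $f$, $\|f\|=\sup\{\sum_{i=1}^m|f(x_i^* )|: m\in\mathbb N,\ x_i^*\in L^*,\ \sup_{x\in L}\sum_{i=1}^m|x_i^*(x)|\le1\}$. $\mathrm{FBL}\langle L\rangle$ is the norm closure of the vector sublattice generated by $\{\delta_x:x\in L\}$ inside the Banach lattice of positively homogeneous functions on $L^*$ with finite norm, with pointwise order and operations. *)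

theory Defs
  imports Complex_Main
begin

definition lat_dual :: "('a::distrib_lattice \<Rightarrow> real) set" where
  "lat_dual = {xs. (\<forall>a b. xs (inf a b) = min (xs a) (xs b)) \<and>
                   (\<forall>a b. xs (sup a b) = max (xs a) (xs b)) \<and>
                   (\<forall>a. \<bar>xs a\<bar> \<le> 1)}"

text \<open>Functions on L^* are represented as functions on all of 'a => real that vanish
  outside L^*.\<close>
definition delta :: "'a::distrib_lattice \<Rightarrow> (('a \<Rightarrow> real) \<Rightarrow> real)" where
  "delta l = (\<lambda>xs. if xs \<in> lat_dual then xs l else 0)"

definition pos_homog :: "(('a::distrib_lattice \<Rightarrow> real) \<Rightarrow> real) \<Rightarrow> bool" where
  "pos_homog f \<longleftrightarrow> (\<forall>c xs. c \<ge> 0 \<longrightarrow> xs \<in> lat_dual \<longrightarrow> (\<lambda>a. c * xs a) \<in> lat_dual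
       \<longrightarrow> f (\<lambda>a. c * xs a) = c * f xs)"

definition fbl_sums :: "(('a::distrib_lattice \<Rightarrow> real) \<Rightarrow> real) \<Rightarrow> real set" where
  "fbl_sums f = {(\<Sum>i<m. \<bar>f (xs i)\<bar>) | (m::nat) xs.
      (\<forall>i<m. xs i \<in> lat_dual) \<and> (\<forall>a. (\<Sum>i<m. \<bar>xs i a\<bar>) \<le> 1)}"

definition fbl_norm :: "(('a::distrib_lattice \<Rightarrow> real) \<Rightarrow> real) \<Rightarrow> real" where
  "fbl_norm f = Sup (fbl_sums f)"

definition PH :: "(('a::distrib_lattice \<Rightarrow> real) \<Rightarrow> real) set" where
  "PH = {f. (\<forall>xs. xs \<notin> lat_dual \<longrightarrow> f xs = 0) \<and> pos_homog f \<and> bdd_above (fbl_sums f)}"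

inductive_set fbl_gen :: "(('a::distrib_lattice \<Rightarrow> real) \<Rightarrow> real) set" where
  gen_delta: "delta x \<in> fbl_gen"
| gen_add: "f \<in> fbl_gen \<Longrightarrow> g \<in> fbl_gen \<Longrightarrow> (\<lambda>xs. f xs + g xs) \<in> fbl_gen"
| gen_scale: "f \<in> fbl_gen \<Longrightarrow> (\<lambda>xs. c * f xs) \<in> fbl_gen"
| gen_sup: "f \<in> fbl_gen \<Longrightarrow> g \<in> fbl_gen \<Longrightarrow> (\<lambda>xs. max (f xs) (g xs)) \<in> fbl_gen"
| gen_inf: "f \<in> fbl_gen \<Longrightarrow> g \<in> fbl_gen \<Longrightarrow> (\<lambda>xs. min (f xs) (g xs)) \<in> fbl_gen"

definition FBL :: "(('a::distrib_lattice \<Rightarrow> real) \<Rightarrow> real) set" where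
  "FBL = {f \<in> PH. \<forall>e>0. \<exists>g\<in>fbl_gen. fbl_norm (\<lambda>xs. f xs - g xs) < e}"

end

theory Submission
  imports Defs
begin

lemma zero_lat_dual: "(\<lambda>_. 0) \<in> lat_dual"
  unfolding lat_dual_def by auto

lemma sum_sub_le:
  fixes x y :: "'a \<Rightarrow> real"
  assumes "finite T" "S \<subseteq> T"
  shows "(\<Sum>a\<in>S. \<bar>x a - y a\<bar>) \<le> (\<Sum>a\<in>T. \<bar>x a - y a\<bar>)"
  by (rule sum_mono2[OF assms]) auto

lemma gen_lip:
  assumes "g \<in> fbl_gen"
  shows "\<exists>S c. finite S \<and> c \<ge> 0 \<and> g (\<lambda>_. 0) = 0 \<and>
    (\<forall>x y. x \<in> lat_dual \<longrightarrow> y \<in> lat_dual \<longrightarrow>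
        \<bar>g x - g y\<bar> \<le> c * (\<Sum>a\<in>S. \<bar>x a - y a\<bar>))"
  using assms
proof induction
  case (gen_delta z)
  show ?case
    by (rule exI[of _ "{z}"], rule exI[of _ 1]) (auto simp: delta_def zero_lat_dual)
next
  case (gen_add f g)
  then obtain S1 c1 S2 c2 where h1: "finite S1" "c1 \<ge> 0" "f (\<lambda>_. 0) = 0"
    "\<forall>x y. x \<in> lat_dual \<longrightarrow> y \<in> lat_dual \<longrightarrow> \<bar>f x - f y\<bar> \<le> c1 * (\<Sum>a\<in>S1. \<bar>x a - y a\<bar>)"
    and h2: "finite S2" "c2 \<ge> 0" "g (\<lambda>_. 0) = 0"
    "\<forall>x y. x \<in> lat_dual \<longrightarrow> y \<in> lat_dual \<longrightarrow> \<bar>g x - g y\<bar> \<le> c2 * (\<Sum>a\<in>S2. \<bar>x a - y a\<bar>)"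
    by blast
  show ?case
  proof (intro exI conjI allI impI)
    show "finite (S1 \<union> S2)" using h1 h2 by auto
    show "0 \<le> c1 + c2" using h1 h2 by auto
    show "f (\<lambda>_. 0) + g (\<lambda>_. 0) = 0" using h1 h2 by auto
    fix x y :: "'a \<Rightarrow> real" assume xy: "x \<in> lat_dual" "y \<in> lat_dual"
    let ?T = "(\<Sum>a\<in>S1 \<union> S2. \<bar>x a - y a\<bar>)"
    have t0: "?T \<ge> 0" by (rule sum_nonneg) auto
    have "\<bar>f x - f y\<bar> \<le> c1 * (\<Sum>a\<in>S1. \<bar>x a - y a\<bar>)" using h1(4) xy by blast
    also have "\<dots> \<le> c1 * ?T" by (rule mult_left_mono[OF sum_sub_le]) (use h1 h2 in auto)
    finally have a: "\<bar>f x - f y\<bar> \<le> c1 * ?T" .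
    have "\<bar>g x - g y\<bar> \<le> c2 * (\<Sum>a\<in>S2. \<bar>x a - y a\<bar>)" using h2(4) xy by blast
    also have "\<dots> \<le> c2 * ?T" by (rule mult_left_mono[OF sum_sub_le]) (use h1 h2 in auto)
    finally have b: "\<bar>g x - g y\<bar> \<le> c2 * ?T" .
    have "\<bar>(f x + g x) - (f y + g y)\<bar> \<le> \<bar>f x - f y\<bar> + \<bar>g x - g y\<bar>" by linarith
    also have "\<dots> \<le> (c1 + c2) * ?T" using a b by (simp add: distrib_right)
    finally show "\<bar>(f x + g x) - (f y + g y)\<bar> \<le> (c1 + c2) * ?T" .
  qed
next
  case (gen_scale f k)
  then obtain S1 c1 where h1: "finite S1" "c1 \<ge> 0" "f (\<lambda>_. 0) = 0"
    "\<forall>x y. x \<in> lat_dual \<longrightarrow> y \<in> lat_dual \<longrightarrow> \<bar>f x - f y\<bar> \<le> c1 * (\<Sum>a\<in>S1. \<bar>x a - y a\<bar>)"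
    by blast
  show ?case
  proof (intro exI conjI allI impI)
    show "finite S1" by fact
    show "0 \<le> \<bar>k\<bar> * c1" using h1 by auto
    show "k * f (\<lambda>_. 0) = 0" using h1 by auto
    fix x y :: "'a \<Rightarrow> real" assume xy: "x \<in> lat_dual" "y \<in> lat_dual"
    have "\<bar>k * f x - k * f y\<bar> = \<bar>k\<bar> * \<bar>f x - f y\<bar>"
      by (metis abs_mult right_diff_distrib)
    also have "\<dots> \<le> \<bar>k\<bar> * (c1 * (\<Sum>a\<in>S1. \<bar>x a - y a\<bar>))"
      using h1(4) xy by (simp add: mult_left_mono)
    finally show "\<bar>k * f x - k * f y\<bar> \<le> \<bar>k\<bar> * c1 * (\<Sum>a\<in>S1. \<bar>x a - y a\<bar>)"
      by (simp add: mult.assoc)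
  qed
next
  case (gen_sup f g)
  then obtain S1 c1 S2 c2 where h1: "finite S1" "c1 \<ge> 0" "f (\<lambda>_. 0) = 0"
    "\<forall>x y. x \<in> lat_dual \<longrightarrow> y \<in> lat_dual \<longrightarrow> \<bar>f x - f y\<bar> \<le> c1 * (\<Sum>a\<in>S1. \<bar>x a - y a\<bar>)"
    and h2: "finite S2" "c2 \<ge> 0" "g (\<lambda>_. 0) = 0"
    "\<forall>x y. x \<in> lat_dual \<longrightarrow> y \<in> lat_dual \<longrightarrow> \<bar>g x - g y\<bar> \<le> c2 * (\<Sum>a\<in>S2. \<bar>x a - y a\<bar>)"
    by blast
  show ?case
  proof (intro exI conjI allI impI)
    show "finite (S1 \<union> S2)" using h1 h2 by auto
    show "0 \<le> c1 + c2" using h1 h2 by auto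
    show "max (f (\<lambda>_. 0)) (g (\<lambda>_. 0)) = 0" using h1 h2 by auto
    fix x y :: "'a \<Rightarrow> real" assume xy: "x \<in> lat_dual" "y \<in> lat_dual"
    let ?T = "(\<Sum>a\<in>S1 \<union> S2. \<bar>x a - y a\<bar>)"
    have t0: "?T \<ge> 0" by (rule sum_nonneg) auto
    have "\<bar>f x - f y\<bar> \<le> c1 * (\<Sum>a\<in>S1. \<bar>x a - y a\<bar>)" using h1(4) xy by blast
    also have "\<dots> \<le> c1 * ?T" by (rule mult_left_mono[OF sum_sub_le]) (use h1 h2 in auto)
    finally have a: "\<bar>f x - f y\<bar> \<le> c1 * ?T" .
    have "\<bar>g x - g y\<bar> \<le> c2 * (\<Sum>a\<in>S2. \<bar>x a - y a\<bar>)" using h2(4) xy by blast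
    also have "\<dots> \<le> c2 * ?T" by (rule mult_left_mono[OF sum_sub_le]) (use h1 h2 in auto)
    finally have b: "\<bar>g x - g y\<bar> \<le> c2 * ?T" .
    have "\<bar>max (f x) (g x) - max (f y) (g y)\<bar> \<le> \<bar>f x - f y\<bar> + \<bar>g x - g y\<bar>" by linarith
    also have "\<dots> \<le> (c1 + c2) * ?T" using a b by (simp add: distrib_right)
    finally show "\<bar>max (f x) (g x) - max (f y) (g y)\<bar> \<le> (c1 + c2) * ?T" .
  qed
next
  case (gen_inf f g)
  then obtain S1 c1 S2 c2 where h1: "finite S1" "c1 \<ge> 0" "f (\<lambda>_. 0) = 0"
    "\<forall>x y. x \<in> lat_dual \<longrightarrow> y \<in> lat_dual \<longrightarrow> \<bar>f x - f y\<bar> \<le> c1 * (\<Sum>a\<in>S1. \<bar>x a - y a\<bar>)"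
    and h2: "finite S2" "c2 \<ge> 0" "g (\<lambda>_. 0) = 0"
    "\<forall>x y. x \<in> lat_dual \<longrightarrow> y \<in> lat_dual \<longrightarrow> \<bar>g x - g y\<bar> \<le> c2 * (\<Sum>a\<in>S2. \<bar>x a - y a\<bar>)"
    by blast
  show ?case
  proof (intro exI conjI allI impI)
    show "finite (S1 \<union> S2)" using h1 h2 by auto
    show "0 \<le> c1 + c2" using h1 h2 by auto
    show "min (f (\<lambda>_. 0)) (g (\<lambda>_. 0)) = 0" using h1 h2 by auto
    fix x y :: "'a \<Rightarrow> real" assume xy: "x \<in> lat_dual" "y \<in> lat_dual"
    let ?T = "(\<Sum>a\<in>S1 \<union> S2. \<bar>x a - y a\<bar>)"
    have t0: "?T \<ge> 0" by (rule sum_nonneg) auto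
    have "\<bar>f x - f y\<bar> \<le> c1 * (\<Sum>a\<in>S1. \<bar>x a - y a\<bar>)" using h1(4) xy by blast
    also have "\<dots> \<le> c1 * ?T" by (rule mult_left_mono[OF sum_sub_le]) (use h1 h2 in auto)
    finally have a: "\<bar>f x - f y\<bar> \<le> c1 * ?T" .
    have "\<bar>g x - g y\<bar> \<le> c2 * (\<Sum>a\<in>S2. \<bar>x a - y a\<bar>)" using h2(4) xy by blast
    also have "\<dots> \<le> c2 * ?T" by (rule mult_left_mono[OF sum_sub_le]) (use h1 h2 in auto)
    finally have b: "\<bar>g x - g y\<bar> \<le> c2 * ?T" .
    have "\<bar>min (f x) (g x) - min (f y) (g y)\<bar> \<le> \<bar>f x - f y\<bar> + \<bar>g x - g y\<bar>" by linarith
    also have "\<dots> \<le> (c1 + c2) * ?T" using a b by (simp add: distrib_right)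
    finally show "\<bar>min (f x) (g x) - min (f y) (g y)\<bar> \<le> (c1 + c2) * ?T" .
  qed
qed

lemma gen_bdd:
  assumes "g \<in> fbl_gen"
  shows "bdd_above (fbl_sums g)"
proof -
  obtain S c where h: "finite S" "c \<ge> 0" "g (\<lambda>_. 0) = 0"
    "\<forall>x y. x \<in> lat_dual \<longrightarrow> y \<in> lat_dual \<longrightarrow> \<bar>g x - g y\<bar> \<le> c * (\<Sum>a\<in>S. \<bar>x a - y a\<bar>)"
    using gen_lip[OF assms] by blast
  have gx: "\<bar>g x\<bar> \<le> c * (\<Sum>a\<in>S. \<bar>x a\<bar>)" if "x \<in> lat_dual" for x
    using h(4)[rule_format, OF that zero_lat_dual] h(3) by simp
  show ?thesis unfolding bdd_above_def
  proof (intro exI ballI)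
    fix s assume "s \<in> fbl_sums g"
    then obtain m :: nat and xs :: "nat \<Rightarrow> 'a \<Rightarrow> real" where s: "s = (\<Sum>i<m. \<bar>g (xs i)\<bar>)" and xs: "\<forall>i<m. xs i \<in> lat_dual"
      "\<forall>a. (\<Sum>i<m. \<bar>xs i a\<bar>) \<le> 1"
      unfolding fbl_sums_def mem_Collect_eq by (elim exE conjE) (rule that, assumption+)
    have "s \<le> (\<Sum>i<m. c * (\<Sum>a\<in>S. \<bar>xs i a\<bar>))"
      unfolding s by (rule sum_mono) (use gx xs in auto)
    also have "\<dots> = c * (\<Sum>a\<in>S. \<Sum>i<m. \<bar>xs i a\<bar>)"
      by (simp add: sum_distrib_left sum.swap[of _ S])
    also have "\<dots> \<le> c * (\<Sum>a\<in>S. 1)"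
      by (rule mult_left_mono[OF sum_mono]) (use xs h in auto)
    finally show "s \<le> c * real (card S)" by simp
  qed
qed

lemma diff_bdd:
  assumes "bdd_above (fbl_sums f)" "bdd_above (fbl_sums g)"
  shows "bdd_above (fbl_sums (\<lambda>xs. f xs - g xs))"
proof -
  obtain Bf where bf: "\<forall>s\<in>fbl_sums f. s \<le> Bf" using assms(1) unfolding bdd_above_def by blast
  obtain Bg where bg: "\<forall>s\<in>fbl_sums g. s \<le> Bg" using assms(2) unfolding bdd_above_def by blast
  show ?thesis unfolding bdd_above_def
  proof (intro exI ballI)
    fix s assume "s \<in> fbl_sums (\<lambda>xs. f xs - g xs)"
    then obtain m :: nat and xs :: "nat \<Rightarrow> 'a \<Rightarrow> real" where s: "s = (\<Sum>i<m. \<bar>f (xs i) - g (xs i)\<bar>)" and xs: "\<forall>i<m. xs i \<in> lat_dual"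
      "\<forall>a. (\<Sum>i<m. \<bar>xs i a\<bar>) \<le> 1"
      unfolding fbl_sums_def mem_Collect_eq by (elim exE conjE) (rule that, assumption+)
    have m1: "(\<Sum>i<m. \<bar>f (xs i)\<bar>) \<in> fbl_sums f" unfolding fbl_sums_def
      by (rule CollectI, rule exI[of _ m], rule exI[of _ xs]) (simp add: xs)
    have m2: "(\<Sum>i<m. \<bar>g (xs i)\<bar>) \<in> fbl_sums g" unfolding fbl_sums_def
      by (rule CollectI, rule exI[of _ m], rule exI[of _ xs]) (simp add: xs)
    have "s \<le> (\<Sum>i<m. \<bar>f (xs i)\<bar> + \<bar>g (xs i)\<bar>)" unfolding s
      by (rule sum_mono) linarith
    also have "\<dots> \<le> Bf + Bg" using m1 m2 bf bg by (simp add: sum.distrib add_mono)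
    finally show "s \<le> Bf + Bg" .
  qed
qed

lemma point_le_norm:
  assumes "bdd_above (fbl_sums h)" "x \<in> lat_dual"
  shows "\<bar>h x\<bar> \<le> fbl_norm h"
proof -
  have b: "\<forall>a. \<bar>x a\<bar> \<le> 1" using assms(2) unfolding lat_dual_def by blast
  have e: "\<bar>h x\<bar> = (\<Sum>i<(1::nat). \<bar>h ((\<lambda>_. x) i)\<bar>)" by simp
  have c: "(\<forall>i<(1::nat). (\<lambda>_. x) i \<in> lat_dual) \<and> (\<forall>a. (\<Sum>i<(1::nat). \<bar>(\<lambda>_. x) i a\<bar>) \<le> 1)"
    using assms(2) b by simp
  have "\<bar>h x\<bar> \<in> fbl_sums h" unfolding fbl_sums_def
    by (rule CollectI, rule exI[of _ "1::nat"], rule exI[of _ "\<lambda>_. x"], intro conjI e c)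
  thus ?thesis unfolding fbl_norm_def using assms(1) by (rule cSup_upper)
qed

definition shiftf :: "real \<Rightarrow> real \<Rightarrow> real" where
  "shiftf e t = max (-1) (min 1 (t + e))"

lemma shiftf_min: "shiftf e (min u v) = min (shiftf e u) (shiftf e v)"
  unfolding shiftf_def by (cases "u \<le> v") auto

lemma shiftf_max: "shiftf e (max u v) = max (shiftf e u) (shiftf e v)"
  unfolding shiftf_def by (cases "u \<le> v") auto

lemma shift_lat_dual:
  assumes "x \<in> lat_dual"
  shows "(\<lambda>a. shiftf e (x a)) \<in> lat_dual"
proof -
  have h: "\<forall>a b. x (inf a b) = min (x a) (x b)" "\<forall>a b. x (sup a b) = max (x a) (x b)"
    using assms unfolding lat_dual_def by blast+
  have ab: "\<bar>shiftf e t\<bar> \<le> 1" for t unfolding shiftf_def by simp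
  show ?thesis unfolding lat_dual_def
    by (intro CollectI conjI allI) (simp_all only: h shiftf_min shiftf_max ab)
qed

theorem mainTheorem13:
  fixes l :: "'a::distrib_lattice" and f :: "('a \<Rightarrow> real) \<Rightarrow> real"
  assumes "f \<in> FBL"
    and "\<forall>xs. min \<bar>f xs\<bar> \<bar>delta l xs\<bar> = 0"
  shows "f = (\<lambda>xs. 0)"
proof (rule ext, rule ccontr)
  fix x assume fx: "f x \<noteq> 0"
  have fPH: "f \<in> PH" using assms(1) unfolding FBL_def by blast
  have xL: "x \<in> lat_dual" using fPH fx by (auto simp: PH_def)
  have fb: "bdd_above (fbl_sums f)" using fPH by (simp add: PH_def)
  have "min \<bar>f x\<bar> \<bar>delta l x\<bar> = 0" using assms(2) by blast
  hence xl: "x l = 0" using fx xL by (auto simp: delta_def)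
  define eta where "eta = \<bar>f x\<bar>"
  have eta: "eta > 0" using fx eta_def by auto
  obtain g where g: "g \<in> fbl_gen" "fbl_norm (\<lambda>xs. f xs - g xs) < eta / 3"
  proof -
    have "eta / 3 > 0" using eta by simp
    thus ?thesis using assms(1) that unfolding FBL_def by blast
  qed
  obtain S c where h: "finite S" "c \<ge> 0"
    "\<forall>x y. x \<in> lat_dual \<longrightarrow> y \<in> lat_dual \<longrightarrow> \<bar>g x - g y\<bar> \<le> c * (\<Sum>a\<in>S. \<bar>x a - y a\<bar>)"
    using gen_lip[OF g(1)] by blast
  have db: "bdd_above (fbl_sums (\<lambda>xs. f xs - g xs))" by (rule diff_bdd[OF fb gen_bdd[OF g(1)]])
  define K where "K = c * real (card S) + 1"
  have "c * real (card S) \<ge> 0" using h(2) by simp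
  hence K: "K > 0" unfolding K_def by linarith
  define e where "e = min 1 (eta / (3 * K))"
  have e0: "e > 0" using eta K e_def by auto
  have e1: "e \<le> 1" using e_def by auto
  have eK: "e * K \<le> eta / 3"
  proof -
    have "e \<le> eta / (3 * K)" using e_def by auto
    hence "e * K \<le> eta / (3 * K) * K" using K by (intro mult_right_mono) auto
    moreover have "eta / (3 * K) * K = eta / 3" using K by simp
    ultimately show ?thesis by linarith
  qed
  define y where "y = (\<lambda>a. shiftf e (x a))"
  have yL: "y \<in> lat_dual" unfolding y_def by (rule shift_lat_dual[OF xL])
  have yl: "y l = e" unfolding y_def shiftf_def using xl e0 e1 by auto
  have "min \<bar>f y\<bar> \<bar>delta l y\<bar> = 0" using assms(2) by blast
  hence fy: "f y = 0" using yL yl e0 by (auto simp: delta_def)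
  have xb: "\<bar>x a\<bar> \<le> 1" for a using xL unfolding lat_dual_def by blast
  have dxy: "\<bar>x a - y a\<bar> \<le> e" for a
    using xb[of a] e0 unfolding y_def shiftf_def by auto
  have "\<bar>g x - g y\<bar> \<le> c * (\<Sum>a\<in>S. \<bar>x a - y a\<bar>)" using h(3) xL yL by blast
  also have "\<dots> \<le> c * (\<Sum>a\<in>S. e)" by (rule mult_left_mono[OF sum_mono]) (use dxy h in auto)
  also have "\<dots> = e * (c * real (card S))" by simp
  also have "\<dots> \<le> e * K" unfolding K_def using e0 by simp
  finally have gxy: "\<bar>g x - g y\<bar> \<le> eta / 3" using eK by linarith
  have n1: "\<bar>f x - g x\<bar> < eta / 3"
    using point_le_norm[OF db xL] g(2) by simp
  have n2: "\<bar>f y - g y\<bar> < eta / 3"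
    using point_le_norm[OF db yL] g(2) by simp
  have "eta < eta" using n1 n2 gxy fy unfolding eta_def by linarith
  thus False by simp
qed

end
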